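(* Let $k$ be an algebraically closed field of characteristic zero, $A=k[x,y]$, $\mathfrak m=(x,y)$. The isomorphism classes of indecomposable $A$-modules $M$ of length $4$ supported at $\mathfrak m$ with $\mathfrak m M\cong k\oplus k$ (where $k=A/\mathfrak m$) form a family $\mathcal F_2$ isomorphic to $\mathbb P^1$. *)

theory Defs
  imports "HOL-Analysis.Analysis" "HOL-Computational_Algebra.Polynomial"
begin

text \<open>A finite-dimensional module M over A = k[x,y] is a k-vector space k^4 (length 4,
  since A/m = k) together with the commuting operators X, Y by which x and y act.\<close>

type_synonym 'k mat4 = "'k^4^4"

definition mpow :: "'k::field mat4 \<Rightarrow> nat \<Rightarrow> 'k mat4" where
  "mpow A n = ((\<lambda>B. A ** B) ^^ n) (mat 1)"

definition is_Amodule :: "'k::field mat4 \<Rightarrow> 'k mat4 \<Rightarrow> bool" where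
  "is_Amodule X Y \<longleftrightarrow> X ** Y = Y ** X"

text \<open>Supported at m = (x,y): some power m^n annihilates M, i.e. all monomials of degree n act by 0.\<close>
definition supported_at_m :: "'k::field mat4 \<Rightarrow> 'k mat4 \<Rightarrow> bool" where
  "supported_at_m X Y \<longleftrightarrow> (\<exists>n. \<forall>i\<le>n. mpow X i ** mpow Y (n - i) = 0)"

definition submodule :: "'k::field mat4 \<Rightarrow> 'k mat4 \<Rightarrow> ('k^4) set \<Rightarrow> bool" where
  "submodule X Y U \<longleftrightarrow> vec.subspace U \<and> (\<forall>u\<in>U. X *v u \<in> U \<and> Y *v u \<in> U)"

definition indecomposable :: "'k::field mat4 \<Rightarrow> 'k mat4 \<Rightarrow> bool" where
  "indecomposable X Y \<longleftrightarrow>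
     \<not> (\<exists>U W. submodule X Y U \<and> submodule X Y W \<and> U \<noteq> {0} \<and> W \<noteq> {0}
          \<and> U \<inter> W = {0} \<and> {u + w | u w. u \<in> U \<and> w \<in> W} = UNIV)"

definition mM :: "'k::field mat4 \<Rightarrow> 'k mat4 \<Rightarrow> ('k^4) set" where
  "mM X Y = {X *v u + Y *v v | u v. True}"

text \<open>mM \<cong> k \<oplus> k as A-modules: mM is 2-dimensional and x, y act on it by zero.\<close>
definition mM_iso_kk :: "'k::field mat4 \<Rightarrow> 'k mat4 \<Rightarrow> bool" where
  "mM_iso_kk X Y \<longleftrightarrow> vec.dim (mM X Y) = 2 \<and> (\<forall>v\<in>mM X Y. X *v v = 0 \<and> Y *v v = 0)"

definition in_F2 :: "'k::field mat4 \<Rightarrow> 'k mat4 \<Rightarrow> bool" where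
  "in_F2 X Y \<longleftrightarrow> is_Amodule X Y \<and> supported_at_m X Y \<and> indecomposable X Y \<and> mM_iso_kk X Y"

definition mod_iso :: "'k::field mat4 \<times> 'k mat4 \<Rightarrow> 'k mat4 \<times> 'k mat4 \<Rightarrow> bool" where
  "mod_iso M N \<longleftrightarrow> (\<exists>P. invertible P \<and> P ** fst M = fst N ** P \<and> P ** snd M = snd N ** P)"

definition poly2 :: "'k::comm_ring_1 poly poly \<Rightarrow> 'k \<Rightarrow> 'k \<Rightarrow> 'k" where
  "poly2 p s t = poly (poly p [:t:]) s"

definition eval_family :: "'k::field poly poly^4^4 \<Rightarrow> 'k poly poly^4^4 \<Rightarrow> 'k \<Rightarrow> 'k \<Rightarrow> 'k mat4 \<times> 'k mat4" where
  "eval_family PX PY s t = ((\<chi> i j. poly2 (PX $ i $ j) s t), (\<chi> i j. poly2 (PY $ i $ j) s t))"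

end

theory Submission
  imports Defs
begin



definition M2 :: "'a::zero \<Rightarrow> 'a \<Rightarrow> 'a \<Rightarrow> 'a \<Rightarrow> 'a^2^2" where
  "M2 a b c d = (\<chi> i j. if i = 1 then (if j = 1 then a else b) else (if j = 1 then c else d))"

lemma M2_nth[simp]: "M2 a b c d $ 1 $ 1 = a" "M2 a b c d $ 1 $ 2 = b" "M2 a b c d $ 2 $ 1 = c" "M2 a b c d $ 2 $ 2 = d"
  by (simp_all add: M2_def)

lemma M2_eta: "A = M2 (A$1$1) (A$1$2) (A$2$1) (A$2$2)"
  by (simp add: vec_eq_iff forall_2 M2_def)

lemma M2_eq[simp]: "M2 a b c d = M2 a' b' c' d' \<longleftrightarrow> a = a' \<and> b = b' \<and> c = c' \<and> d = d'"
  by (auto simp: vec_eq_iff forall_2 M2_def)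

lemma M2_mult[simp]: "M2 a b c d ** M2 e f g h = M2 (a*e+b*g) (a*f+b*h) (c*e+d*g) (c*f+d*h)"
  for a :: "'a::semiring_1"
  by (simp add: vec_eq_iff forall_2 M2_def matrix_matrix_mult_def sum_2)

lemma M2_one: "(mat 1 :: 'a::zero_neq_one^2^2) = M2 1 0 0 1"
  by (simp add: vec_eq_iff forall_2 M2_def mat_def)

lemma M2_zero: "(0 :: 'a::zero^2^2) = M2 0 0 0 0"
  by (simp add: vec_eq_iff forall_2 M2_def)

lemma M2_mv[simp]: "M2 a b c d *v v = (\<chi> i. if i = 1 then a * v$1 + b * v$2 else c * v$1 + d * v$2)"
  for a :: "'a::semiring_1"
  by (simp add: vec_eq_iff forall_2 M2_def matrix_vector_mult_def sum_2)

definition isb :: "4 \<Rightarrow> bool" where "isb i \<longleftrightarrow> i = 3 \<or> i = 4"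
definition bi :: "4 \<Rightarrow> 2" where "bi i = (if i = 1 \<or> i = 3 then 1 else 2)"

lemma isb_simps[simp]: "\<not> isb 1" "\<not> isb 2" "isb 3" "isb 4" by (simp_all add: isb_def)
lemma bi_simps[simp]: "bi 1 = 1" "bi 2 = 2" "bi 3 = 1" "bi 4 = 2" by (simp_all add: bi_def)

definition lowX :: "'a::zero^2^2 \<Rightarrow> 'a^4^4" where
  "lowX A = (\<chi> i j. if isb i \<and> \<not> isb j then A $ bi i $ bi j else 0)"

definition diagM :: "'a::zero^2^2 \<Rightarrow> 'a^2^2 \<Rightarrow> 'a^4^4" where
  "diagM H1 H2 = (\<chi> i j. if isb i = isb j then (if isb i then H2 else H1) $ bi i $ bi j else 0)"

lemmas ent4 = vec_eq_iff forall_4 forall_2 matrix_matrix_mult_def sum_4 sum_2 lowX_def diagM_def mat_def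

lemma lowX_lowX[simp]: "lowX A ** lowX B = (0::'a::semiring_1^4^4)"
  by (simp add: ent4)

lemma diag_lowX: "diagM H1 H2 ** lowX A = lowX (H2 ** A)" for A :: "'a::semiring_1^2^2"
  by (simp add: ent4)

lemma lowX_diag: "lowX A ** diagM H1 H2 = lowX (A ** H1)" for A :: "'a::semiring_1^2^2"
  by (simp add: ent4)

lemma diag_diag: "diagM H1 H2 ** diagM K1 K2 = diagM (H1 ** K1) (H2 ** K2)" for H1 :: "'a::semiring_1^2^2"
  by (simp add: ent4)

lemma diag_one: "diagM (mat 1) (mat 1) = (mat 1 :: 'a::zero_neq_one^4^4)"
  by (simp add: ent4)

lemma diag_zero: "diagM 0 0 = (0 :: 'a::zero^4^4)"
  by (simp add: ent4)

lemma diag_eq: "diagM H1 H2 = diagM K1 K2 \<longleftrightarrow> H1 = K1 \<and> H2 = K2" 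
  by (auto simp: ent4)

lemma lowX_eq: "lowX A = lowX B \<longleftrightarrow> A = B"
  by (auto simp: ent4)


lemma mm_diff_l: "(A::'a::ring_1^'n^'m) ** (B - C) = A ** B - A ** C"
  by (simp add: matrix_matrix_mult_def vec_eq_iff sum_subtractf[symmetric] algebra_simps)
lemma mm_diff_r: "((A::'a::ring_1^'n^'m) - B) ** C = A ** C - B ** C"
  by (simp add: matrix_matrix_mult_def vec_eq_iff sum_subtractf[symmetric] algebra_simps)
lemma mm_add_r: "((A::'a::semiring_1^'n^'m) + B) ** C = A ** C + B ** C"
  by (simp add: matrix_matrix_mult_def vec_eq_iff sum.distrib[symmetric] algebra_simps)

definition splitE :: "'k::field^4^4 \<Rightarrow> 'k^4^4 \<Rightarrow> bool" where
  "splitE X Y \<longleftrightarrow> (\<exists>E. E ** E = E \<and> E \<noteq> 0 \<and> E \<noteq> mat 1 \<and> E ** X = X ** E \<and> E ** Y = Y ** E)"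

lemma split_imp_decomp:
  fixes X Y :: "'k::field^4^4"
  assumes "splitE X Y" shows "\<not> indecomposable X Y"
proof -
  obtain E where E: "E ** E = E" "E \<noteq> 0" "E \<noteq> mat 1" "E ** X = X ** E" "E ** Y = Y ** E"
    using assms unfolding splitE_def by blast
  define F where "F = mat 1 - E"
  have F: "F ** F = F" "F ** X = X ** F" "F ** Y = Y ** F" "E ** F = 0" "F ** E = 0"
    using E by (simp_all add: F_def mm_diff_l mm_diff_r)
  define U where "U = range ((*v) E)"
  define W where "W = range ((*v) F)"
  have sU: "submodule X Y U"
    unfolding submodule_def U_def
  proof
    show "vec.subspace (range ((*v) E))"
      by (rule vec.subspace_image) simp
    show "\<forall>u\<in>range ((*v) E). X *v u \<in> range ((*v) E) \<and> Y *v u \<in> range ((*v) E)"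
    proof
      fix u assume "u \<in> range ((*v) E)"
      then obtain a where a: "u = E *v a" by auto
      have "X *v u = E *v (X *v a)" "Y *v u = E *v (Y *v a)"
        using E by (simp_all add: a matrix_vector_mul_assoc)
      then show "X *v u \<in> range ((*v) E) \<and> Y *v u \<in> range ((*v) E)" by simp
    qed
  qed
  have sW: "submodule X Y W"
    unfolding submodule_def W_def
  proof
    show "vec.subspace (range ((*v) F))"
      by (rule vec.subspace_image) simp
    show "\<forall>u\<in>range ((*v) F). X *v u \<in> range ((*v) F) \<and> Y *v u \<in> range ((*v) F)"
    proof
      fix u assume "u \<in> range ((*v) F)"
      then obtain a where a: "u = F *v a" by auto
      have "X *v u = F *v (X *v a)" "Y *v u = F *v (Y *v a)"
        using F by (simp_all add: a matrix_vector_mul_assoc)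
      then show "X *v u \<in> range ((*v) F) \<and> Y *v u \<in> range ((*v) F)" by simp
    qed
  qed
  have U0: "U \<noteq> {0}"
  proof
    assume "U = {0}"
    then have "\<forall>x. E *v x = 0 *v x" unfolding U_def by auto
    then show False using E(2) matrix_eq by blast
  qed
  have W0: "W \<noteq> {0}"
  proof
    assume "W = {0}"
    then have "\<forall>x. F *v x = 0 *v x" unfolding W_def by auto
    then have "F = 0" using matrix_eq by blast
    then show False using E(3) by (simp add: F_def)
  qed
  have UW: "U \<inter> W = {0}"
  proof safe
    fix v assume "v \<in> U" "v \<in> W"
    from \<open>v \<in> U\<close> obtain a where va: "v = E *v a" unfolding U_def by auto
    from \<open>v \<in> W\<close> obtain b where vb: "v = F *v b" unfolding W_def by auto
    note v = va vb
    have "E *v v = v" using v(1) E(1) by (simp add: matrix_vector_mul_assoc)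
    moreover have "E *v v = 0" using v(2) F(4) by (simp add: matrix_vector_mul_assoc)
    ultimately show "v = 0" by simp
  next
    show "0 \<in> U" unfolding U_def by (metis matrix_vector_mult_0_right rangeI)
    show "0 \<in> W" unfolding W_def by (metis matrix_vector_mult_0_right rangeI)
  qed
  have sum0: "v \<in> {u + w | u w. u \<in> U \<and> w \<in> W}" for v :: "'k^4"
  proof -
    have "v = E *v v + F *v v" by (simp add: F_def matrix_vector_mult_diff_rdistrib)
    then show "v \<in> {u + w | u w. u \<in> U \<and> w \<in> W}" unfolding U_def W_def by blast
  qed
  have sum: "{u + w | u w. u \<in> U \<and> w \<in> W} = UNIV" using sum0 by blast
  show ?thesis unfolding indecomposable_def using sU sW U0 W0 UW sum by blast
qed
lemma decomp_imp_split:
  fixes X Y :: "'k::field^4^4"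
  assumes "\<not> indecomposable X Y" shows "splitE X Y"
proof -
  obtain U W where sU: "submodule X Y U" and sW: "submodule X Y W" and U0: "U \<noteq> {0}"
    and W0: "W \<noteq> {0}" and UW: "U \<inter> W = {0}" and sum: "{u + w | u w. u \<in> U \<and> w \<in> W} = UNIV"
    using assms unfolding indecomposable_def by blast
  have subU: "vec.subspace U" and subW: "vec.subspace W" using sU sW by (auto simp: submodule_def)
  have uniq: "u = u'" if "u \<in> U" "u' \<in> U" "v - u \<in> W" "v - u' \<in> W" for u u' v
  proof -
    have "u - u' \<in> U" using vec.subspace_diff[OF subU that(1) that(2)] .
    moreover have "u - u' \<in> W" using vec.subspace_diff[OF subW that(4) that(3)] by simp
    ultimately have "u - u' \<in> U \<inter> W" by (rule IntI)
    then show ?thesis using UW by simp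
  qed
  have ex: "\<exists>u. u \<in> U \<and> v - u \<in> W" for v
  proof -
    have "v \<in> {u + w | u w. u \<in> U \<and> w \<in> W}" using sum by blast
    then obtain u w where "u \<in> U" "w \<in> W" "v = u + w" by blast
    then show ?thesis by (intro exI[of _ u]) simp
  qed
  define f where "f v = (THE u. u \<in> U \<and> v - u \<in> W)" for v
  have fP: "f v \<in> U \<and> v - f v \<in> W" for v
  proof -
    obtain u where "u \<in> U \<and> v - u \<in> W" using ex by blast
    then have "u \<in> U \<and> v - u \<in> W" by blast
    then show ?thesis unfolding f_def
      by (rule theI[where a=u]) (metis uniq \<open>u \<in> U \<and> v - u \<in> W\<close>)
  qed
  have fI: "f v = u" if "u \<in> U" "v - u \<in> W" for u v
    using uniq[OF that(1) _ that(2)] fP by blast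
  have lin: "Vector_Spaces.linear (*s) (*s) f"
    unfolding Vector_Spaces.linear_iff
  proof (intro conjI allI)
    show "vector_space ((*s) :: 'k \<Rightarrow> 'k^4 \<Rightarrow> 'k^4)" by (rule vec.vector_space_axioms)
    show "vector_space ((*s) :: 'k \<Rightarrow> 'k^4 \<Rightarrow> 'k^4)" by (rule vec.vector_space_axioms)
    fix x y :: "'k^4" and c :: 'k
    have "f x + f y \<in> U" using fP subU vec.subspace_add by blast
    moreover have "(x + y) - (f x + f y) \<in> W"
      using vec.subspace_add[OF subW conjunct2[OF fP[of x]] conjunct2[OF fP[of y]]] by (simp add: algebra_simps)
    ultimately show "f (x + y) = f x + f y" by (rule fI)
    have "c *s f x \<in> U" using fP subU vec.subspace_scale by blast
    moreover have "c *s x - c *s f x \<in> W"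
      using vec.subspace_scale[OF subW conjunct2[OF fP[of x]], of c] by (simp add: vector_ssub_ldistrib)
    ultimately show "f (c *s x) = c *s f x" by (rule fI)
  qed
  define E where "E = matrix f"
  have Ev: "E *v v = f v" for v unfolding E_def using matrix_works[OF lin] .
  have comm: "E ** Z = Z ** E" if "\<forall>u\<in>U. Z *v u \<in> U" "\<forall>u\<in>W. Z *v u \<in> W" for Z
  proof -
    have "E *v (Z *v v) = Z *v (E *v v)" for v
    proof -
      have "Z *v f v \<in> U" using that fP by blast
      moreover have "Z *v (v - f v) \<in> W"
        using that fP by blast
      then have "Z *v v - Z *v f v \<in> W" by (simp add: matrix_vector_mult_diff_distrib)
      ultimately show ?thesis unfolding Ev by (intro fI)
    qed
    then show ?thesis by (simp add: matrix_eq matrix_vector_mul_assoc)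
  qed
  have EX: "E ** X = X ** E" using sU sW by (intro comm) (auto simp: submodule_def)
  have EY: "E ** Y = Y ** E" using sU sW by (intro comm) (auto simp: submodule_def)
  have EE: "E ** E = E"
  proof -
    have "E *v (E *v v) = E *v v" for v
      unfolding Ev by (rule fI) (use fP subW vec.subspace_0 in auto)
    then show ?thesis by (simp add: matrix_eq matrix_vector_mul_assoc)
  qed
  obtain u where u: "u \<in> U" "u \<noteq> 0" using U0 subU vec.subspace_0 by blast
  obtain w where w: "w \<in> W" "w \<noteq> 0" using W0 subW vec.subspace_0 by blast
  have "E *v u = u" unfolding Ev by (rule fI) (use u subW vec.subspace_0 in auto)
  then have E0: "E \<noteq> 0" using u by auto
  have "E *v w = 0" unfolding Ev by (rule fI) (use w subU vec.subspace_0 in auto)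
  then have E1: "E \<noteq> mat 1" using w by auto
  show ?thesis unfolding splitE_def using EE E0 E1 EX EY by blast
qed

lemma indec_iff: "indecomposable X Y \<longleftrightarrow> \<not> splitE X Y"
  using split_imp_decomp decomp_imp_split by blast



section \<open>Isomorphisms\<close>

lemma mod_iso_refl: "mod_iso M M"
  unfolding mod_iso_def invertible_def by (intro exI[of _ "mat 1"]) auto

lemma mod_iso_sym: assumes "mod_iso M N" shows "mod_iso N M"
proof -
  obtain P where P: "invertible P" "P ** fst M = fst N ** P" "P ** snd M = snd N ** P"
    using assms unfolding mod_iso_def by blast
  obtain Q where Q: "P ** Q = mat 1" "Q ** P = mat 1" using P(1) unfolding invertible_def by blast
  have "Q ** fst N = Q ** fst N ** (P ** Q)" by (simp add: Q)
  also have "\<dots> = Q ** (P ** fst M) ** Q" by (simp add: P(2) matrix_mul_assoc)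
  also have "\<dots> = fst M ** Q" by (simp add: Q matrix_mul_assoc)
  finally have 1: "Q ** fst N = fst M ** Q" .
  have "Q ** snd N = Q ** snd N ** (P ** Q)" by (simp add: Q)
  also have "\<dots> = Q ** (P ** snd M) ** Q" by (simp add: P(3) matrix_mul_assoc)
  also have "\<dots> = snd M ** Q" by (simp add: Q matrix_mul_assoc)
  finally have 2: "Q ** snd N = snd M ** Q" .
  have "invertible Q" unfolding invertible_def using Q by blast
  then show ?thesis unfolding mod_iso_def using 1 2 by blast
qed

lemma mod_iso_trans: assumes "mod_iso L M" "mod_iso M N" shows "mod_iso L N"
proof -
  obtain P where P: "invertible P" "P ** fst L = fst M ** P" "P ** snd L = snd M ** P"
    using assms(1) unfolding mod_iso_def by blast
  obtain Q where Q: "invertible Q" "Q ** fst M = fst N ** Q" "Q ** snd M = snd N ** Q"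
    using assms(2) unfolding mod_iso_def by blast
  have "(Q ** P) ** fst L = Q ** (P ** fst L)" by (simp only: matrix_mul_assoc)
  also have "\<dots> = (Q ** fst M) ** P" by (simp only: P(2) matrix_mul_assoc)
  also have "\<dots> = fst N ** (Q ** P)" by (simp only: Q(2) matrix_mul_assoc)
  finally have 1: "(Q ** P) ** fst L = fst N ** (Q ** P)" .
  have "(Q ** P) ** snd L = Q ** (P ** snd L)" by (simp only: matrix_mul_assoc)
  also have "\<dots> = (Q ** snd M) ** P" by (simp only: P(3) matrix_mul_assoc)
  also have "\<dots> = snd N ** (Q ** P)" by (simp only: Q(3) matrix_mul_assoc)
  finally have 2: "(Q ** P) ** snd L = snd N ** (Q ** P)" .
  note 1 2
  moreover note 2
  ultimately show ?thesis unfolding mod_iso_def using invertible_mult[OF Q(1) P(1)] by blast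
qed

lemma split_transport:
  assumes "mod_iso (X, Y) (X', Y')" "splitE X' Y'" shows "splitE X Y"
proof -
  obtain P where P: "invertible P" "P ** X = X' ** P" "P ** Y = Y' ** P"
    using assms(1) unfolding mod_iso_def by auto
  obtain Q where Q: "P ** Q = mat 1" "Q ** P = mat 1" using P(1) unfolding invertible_def by blast
  obtain E where E: "E ** E = E" "E \<noteq> 0" "E \<noteq> mat 1" "E ** X' = X' ** E" "E ** Y' = Y' ** E"
    using assms(2) unfolding splitE_def by blast
  define F where "F = Q ** E ** P"
  have "X = (Q ** P) ** X" by (simp add: Q)
  also have "\<dots> = Q ** X' ** P" by (simp only: P(2) flip: matrix_mul_assoc)
  finally have XQ: "X = Q ** X' ** P" .
  have "Y = (Q ** P) ** Y" by (simp add: Q)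
  also have "\<dots> = Q ** Y' ** P" by (simp only: P(3) flip: matrix_mul_assoc)
  finally have YQ: "Y = Q ** Y' ** P" .
  have "F ** F = Q ** (E ** (P ** Q) ** E) ** P" by (simp add: F_def matrix_mul_assoc)
  also have "\<dots> = F" using E(1) Q(1) by (simp add: F_def matrix_mul_assoc)
  finally have FF: "F ** F = F" .
  have FX: "F ** X = X ** F"
  proof -
    have "F ** X = Q ** (E ** (P ** Q) ** X') ** P" by (simp add: F_def XQ matrix_mul_assoc)
    also have "\<dots> = Q ** (X' ** (P ** Q) ** E) ** P" using Q(1) E(4) by simp
    also have "\<dots> = X ** F" by (simp add: F_def XQ matrix_mul_assoc)
    finally show ?thesis .
  qed
  have FY: "F ** Y = Y ** F"
  proof -
    have "F ** Y = Q ** (E ** (P ** Q) ** Y') ** P" by (simp add: F_def YQ matrix_mul_assoc)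
    also have "\<dots> = Q ** (Y' ** (P ** Q) ** E) ** P" using Q(1) E(5) by simp
    also have "\<dots> = Y ** F" by (simp add: F_def YQ matrix_mul_assoc)
    finally show ?thesis .
  qed
  have "P ** F ** Q = (P ** Q) ** E ** (P ** Q)" by (simp only: F_def matrix_mul_assoc)
  then have EF: "E = P ** F ** Q" by (simp add: Q)
  have F0: "F \<noteq> 0" using E(2) EF by auto
  have F1: "F \<noteq> mat 1" using E(3) EF Q by auto
  show ?thesis unfolding splitE_def using FF F0 F1 FX FY by blast
qed

lemma indec_transport:
  assumes "mod_iso (X, Y) (X', Y')" "indecomposable X Y" shows "indecomposable X' Y'"
  using split_transport assms indec_iff by blast


section \<open>2x2 algebra\<close>

definition det2 :: "'a::comm_ring_1^2^2 \<Rightarrow> 'a" where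
  "det2 A = A$1$1 * A$2$2 - A$1$2 * A$2$1"

definition mixed :: "'a::comm_ring_1^2^2 \<Rightarrow> 'a^2^2 \<Rightarrow> 'a" where
  "mixed W Z = W$1$1 * Z$2$2 + W$2$2 * Z$1$1 - W$1$2 * Z$2$1 - W$2$1 * Z$1$2"

definition comb :: "'a::comm_ring_1 \<Rightarrow> 'a \<Rightarrow> 'a^2^2 \<Rightarrow> 'a^2^2 \<Rightarrow> 'a^2^2" where
  "comb a b A B = M2 (a * A$1$1 + b * B$1$1) (a * A$1$2 + b * B$1$2) (a * A$2$1 + b * B$2$1) (a * A$2$2 + b * B$2$2)"

lemma det2_M2[simp]: "det2 (M2 a b c d) = a * d - b * c" by (simp add: det2_def)
lemma mixed_M2[simp]: "mixed (M2 a b c d) (M2 e f g h) = a * h + d * e - b * g - c * f"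
  by (simp add: mixed_def)
lemma comb_M2[simp]: "comb x y (M2 a b c d) (M2 e f g h) = M2 (x*a+y*e) (x*b+y*f) (x*c+y*g) (x*d+y*h)"
  by (simp add: comb_def)

lemma M2_cases: obtains a b c d where "A = M2 a b c d"
  using M2_eta by blast

lemma det2_mult: "det2 (A ** B) = det2 A * det2 (B::'a::comm_ring_1^2^2)"
  by (cases A rule: M2_cases, cases B rule: M2_cases) (simp add: algebra_simps)

lemma det2_comb: "det2 (comb x y A B) = x^2 * det2 A + x * y * mixed A B + y^2 * det2 B"
  by (cases A rule: M2_cases, cases B rule: M2_cases) (simp add: algebra_simps power2_eq_square)

lemma mult_comb: "G ** comb x y A B = comb x y (G ** A) (G ** B)"
  by (cases A rule: M2_cases, cases B rule: M2_cases, cases G rule: M2_cases) (simp add: algebra_simps)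

lemma comb_mult: "comb x y A B ** H = comb x y (A ** H) (B ** H)"
  by (cases A rule: M2_cases, cases B rule: M2_cases, cases H rule: M2_cases) (simp add: algebra_simps)

lemma comb_comb:
  assumes "s * r - t * p = (1::'a::comm_ring_1)"
  shows "comb r (-t) (comb s t A B) (comb p r A B) = A" "comb (-p) s (comb s t A B) (comb p r A B) = B"
proof -
  obtain a b c d where A: "A = M2 a b c d" by (rule M2_cases)
  obtain e f g h where B: "B = M2 e f g h" by (rule M2_cases)
  have 1: "r * (s * x + t * y) - t * (p * x + r * y) = x" for x y
  proof -
    have "r * (s * x + t * y) - t * (p * x + r * y) = (s * r - t * p) * x" by (simp add: algebra_simps)
    then show ?thesis using assms by simp
  qed
  have 2: "s * (p * x + r * y) - p * (s * x + t * y) = y" for x y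
  proof -
    have "s * (p * x + r * y) - p * (s * x + t * y) = (s * r - t * p) * y" by (simp add: algebra_simps)
    then show ?thesis using assms by simp
  qed
  show "comb r (-t) (comb s t A B) (comb p r A B) = A" "comb (-p) s (comb s t A B) (comb p r A B) = B"
    by (simp_all add: A B 1 2)
qed

lemma det2_inv: assumes "det2 A \<noteq> (0::'a::field)" shows "invertible A"
proof -
  obtain a b c d where A: "A = M2 a b c d" by (rule M2_cases)
  let ?D = "a * d - b * c"
  have D: "?D \<noteq> 0" using assms A by simp
  define i where "i = inverse ?D"
  have Di: "?D * i = 1" using D by (simp add: i_def)
  let ?B = "M2 (d * i) (- b * i) (- c * i) (a * i)"
  have e1: "a * (d * i) + b * (- c * i) = 1" "d * i * a + - b * i * c = 1"
    "c * (- b * i) + d * (a * i) = 1" "- c * i * b + a * i * d = 1"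
    using Di by (simp_all add: algebra_simps)
  have e2: "a * (- b * i) + b * (a * i) = 0" "c * (d * i) + d * (- c * i) = 0"
     "d * i * b + - b * i * d = 0" "- c * i * a + a * i * c = 0"
    by (simp_all add: algebra_simps)
  have "A ** ?B = mat 1" "?B ** A = mat 1"
    by (simp_all only: A M2_one M2_mult e1 e2)
  then show ?thesis unfolding invertible_def by blast
qed

lemma inv_det2: assumes "invertible (A::'a::field^2^2)" shows "det2 A \<noteq> 0"
proof -
  obtain B where "A ** B = mat 1" using assms unfolding invertible_def by blast
  then have "det2 A * det2 B = 1" using det2_mult[of A B] by (simp add: M2_one)
  then show ?thesis by auto
qed


section \<open>Lifting 2x2 data to 4x4\<close>

definition equiv2 :: "'k::field^2^2 \<Rightarrow> 'k^2^2 \<Rightarrow> 'k^2^2 \<Rightarrow> 'k^2^2 \<Rightarrow> bool" where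
  "equiv2 A B A' B' \<longleftrightarrow> (\<exists>G H. invertible G \<and> invertible H \<and> G ** A = A' ** H \<and> G ** B = B' ** H)"

lemma lift_iso:
  assumes "equiv2 A B A' B'" shows "mod_iso (lowX A, lowX B) (lowX A', lowX B')"
proof -
  obtain G H where GH: "invertible G" "invertible H" "G ** A = A' ** H" "G ** B = B' ** H"
    using assms unfolding equiv2_def by blast
  obtain G' where G': "G ** G' = mat 1" "G' ** G = mat 1" using GH(1) unfolding invertible_def by blast
  obtain H' where H': "H ** H' = mat 1" "H' ** H = mat 1" using GH(2) unfolding invertible_def by blast
  have "invertible (diagM H G)" unfolding invertible_def
    by (intro exI[of _ "diagM H' G'"]) (simp add: diag_diag G' H' diag_one)
  moreover have "diagM H G ** lowX A = lowX A' ** diagM H G" "diagM H G ** lowX B = lowX B' ** diagM H G"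
    by (simp_all add: diag_lowX lowX_diag GH)
  ultimately show ?thesis unfolding mod_iso_def by auto
qed

lemma split_of_H:
  fixes A B :: "'k::field^2^2"
  assumes "H1 ** H1 = H1" "H2 ** H2 = H2" "H2 ** A = A ** H1" "H2 ** B = B ** H1"
    "\<not> (H1 = 0 \<and> H2 = 0)" "\<not> (H1 = mat 1 \<and> H2 = mat 1)"
  shows "splitE (lowX A) (lowX B)"
  unfolding splitE_def
proof (intro exI[of _ "diagM H1 H2"] conjI)
  show "diagM H1 H2 ** diagM H1 H2 = diagM H1 H2" by (simp add: diag_diag assms)
  show "diagM H1 H2 \<noteq> 0" using assms(5) by (metis diag_eq diag_zero)
  show "diagM H1 H2 \<noteq> mat 1" using assms(6) by (metis diag_eq diag_one)
  show "diagM H1 H2 ** lowX A = lowX A ** diagM H1 H2" by (simp add: diag_lowX lowX_diag assms)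
  show "diagM H1 H2 ** lowX B = lowX B ** diagM H1 H2" by (simp add: diag_lowX lowX_diag assms)
qed

lemma mat_comm: "mat c ** M = M ** (mat c :: 'a::comm_semiring_1^'n^'n)"
  by (simp add: vec_eq_iff matrix_matrix_mult_def mat_def if_distrib if_distribR sum.delta' mult.commute
      cong: if_cong)

lemma lowX_comb: "lowX (comb a b A B) = mat a ** lowX A + mat b ** lowX (B::'a::comm_ring_1^2^2)"
  by (simp add: ent4 comb_def M2_def)

lemma intertwine_comb:
  fixes A B A' B' :: "'a::comm_ring_1^2^2"
  assumes "P ** lowX A = lowX A' ** P" "P ** lowX B = lowX B' ** P"
  shows "P ** lowX (comb a b A B) = lowX (comb a b A' B') ** P"
proof -
  have "P ** lowX (comb a b A B) = mat a ** (P ** lowX A) + mat b ** (P ** lowX B)"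
    by (simp add: lowX_comb matrix_add_ldistrib matrix_mul_assoc mat_comm)
       (simp add: mat_comm flip: matrix_mul_assoc)
  also have "\<dots> = mat a ** (lowX A' ** P) + mat b ** (lowX B' ** P)" by (simp add: assms)
  also have "\<dots> = lowX (comb a b A' B') ** P"
    by (simp add: lowX_comb mm_add_r matrix_mul_assoc)
  finally show ?thesis .
qed

lemma split_comb:
  fixes A B :: "'k::field^2^2"
  assumes "splitE (lowX A) (lowX B)"
  shows "splitE (lowX (comb a b A B)) (lowX (comb c d A B))"
  using assms intertwine_comb unfolding splitE_def by metis

lemma idem_aux: "x * a + a * x = x \<Longrightarrow> a = 0 \<or> a = 1 \<Longrightarrow> x = (0::'k::field)"
proof -
  assume h: "x * a + a * x = x" "a = 0 \<or> a = 1"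
  show ?thesis using h(2)
  proof
    assume "a = 0" then show ?thesis using h(1) by simp
  next
    assume "a = 1" then have "x + x = x" using h(1) by simp
    then show ?thesis by (metis add_cancel_right_right)
  qed
qed

definition J0 :: "'a::zero_neq_one^2^2" where "J0 = M2 0 1 0 0"

lemma nosplit_J0: "\<not> splitE (lowX (J0::'k::field^2^2)) (lowX (mat 1))"
proof
  assume "splitE (lowX (J0::'k^2^2)) (lowX (mat 1))"
  then obtain E :: "'k^4^4" where E: "E ** E = E" "E \<noteq> 0" "E \<noteq> mat 1" "E ** lowX J0 = lowX J0 ** E"
    "E ** lowX (mat 1) = lowX (mat 1) ** E"
    unfolding splitE_def by blast
  from E(4) E(5) have eqs: "\<forall>i j. (E ** lowX J0) $ i $ j = (lowX J0 ** E) $ i $ j"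
    "\<forall>i j. (E ** lowX (mat 1)) $ i $ j = (lowX (mat 1) ** E) $ i $ j" by auto
  then have z: "E$1$3 = 0" "E$1$4 = 0" "E$2$3 = 0" "E$2$4 = 0" "E$2$1 = 0"
    "E$3$3 = E$1$1" "E$4$4 = E$1$1" "E$2$2 = E$1$1" "E$3$4 = E$1$2" "E$4$3 = 0"
    by (simp_all add: ent4 J0_def M2_def)
  from E(1) have ee: "\<forall>i j. (E ** E) $ i $ j = E $ i $ j" by simp
  define a where "a = E$1$1"
  define b where "b = E$1$2"
  have e11: "a * a = a" using ee z unfolding a_def by (simp add: ent4)
  have e12: "a * b + b * a = b" using ee z unfolding a_def b_def by (simp add: ent4)
  have b0: "b = 0"
  proof -
    from e11 have "a = 0 \<or> a = 1" by (metis mult_cancel_right1 mult_zero_left)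
    then show ?thesis
    proof
      assume "a = 0" then show ?thesis using e12 by simp
    next
      assume "a = 1" then have "b + b = b" using e12 by simp
      then show ?thesis by (metis add_cancel_right_right)
    qed
  qed
  have a01: "a = 0 \<or> a = 1" using e11 by (metis mult_cancel_right1 mult_zero_left)
  have r: "E$3$1 = 0 \<and> E$3$2 = 0 \<and> E$4$1 = 0 \<and> E$4$2 = 0"
  proof -
    have "(E**E)$3$1 = E$3$1" "(E**E)$3$2 = E$3$2" "(E**E)$4$1 = E$4$1" "(E**E)$4$2 = E$4$2"
      using ee by auto
    then have "E$3$1 * a + a * E$3$1 = E$3$1" "E$3$2 * a + a * E$3$2 = E$3$2"
      "E$4$1 * a + a * E$4$1 = E$4$1" "E$4$2 * a + a * E$4$2 = E$4$2"
      using z b0 unfolding a_def b_def by (simp_all add: ent4)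
    then show ?thesis using a01 idem_aux by metis
  qed
  have "E = mat a"
    using z r b0 unfolding vec_eq_iff forall_4 a_def b_def by (simp add: mat_def)
  then have "E = 0 \<or> E = mat 1" using a01 by auto
  then show False using E by auto
qed



definition Af :: "'a::comm_ring_1 \<Rightarrow> 'a \<Rightarrow> 'a^2^2" where "Af s t = M2 s (2 * t) (-t) 0"
definition Bf :: "'a::comm_ring_1 \<Rightarrow> 'a \<Rightarrow> 'a^2^2" where "Bf s t = M2 0 (- s) (2 * s) t"

definition ps :: "'a::comm_ring_1 poly poly" where "ps = [:[:0,1:]:]"
definition pt :: "'a::comm_ring_1 poly poly" where "pt = [:0,1:]"

lemma poly2_ps[simp]: "poly2 ps s t = s" and poly2_pt[simp]: "poly2 pt s t = t"
  by (simp_all add: poly2_def ps_def pt_def)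

lemma poly2_hom[simp]: "poly2 (a + b) s t = poly2 a s t + poly2 b s t" "poly2 (- a) s t = - poly2 a s t"
  "poly2 (a * b) s t = poly2 a s t * poly2 b s t" "poly2 0 s t = 0" "poly2 2 s t = 2"
  by (simp_all add: poly2_def)

definition PA :: "'a::comm_ring_1 poly poly^2^2" where "PA = M2 ps (2 * pt) (-pt) 0"
definition PB :: "'a::comm_ring_1 poly poly^2^2" where "PB = M2 0 (-ps) (2 * ps) pt"

lemma eval_fam: "eval_family (lowX PA) (lowX PB) s t = (lowX (Af s t), lowX (Bf s t))"
  by (simp add: eval_family_def ent4 PA_def PB_def Af_def Bf_def M2_def)


lemma equiv2_of_ST:
  fixes Z W S T :: "'k::field^2^2"
  assumes "invertible S" "invertible T" "W ** T = S" "Z ** T = S ** J0"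
  shows "equiv2 Z W J0 (mat 1)"
proof -
  obtain S' where S': "S ** S' = mat 1" "S' ** S = mat 1" using assms(1) unfolding invertible_def by blast
  obtain T' where T': "T ** T' = mat 1" "T' ** T = mat 1" using assms(2) unfolding invertible_def by blast
  have iS: "invertible S'" and iT: "invertible T'" using S' T' unfolding invertible_def by blast+
  have "S' ** Z = S' ** Z ** (T ** T')" by (simp add: T')
  also have "\<dots> = S' ** (Z ** T) ** T'" by (simp add: matrix_mul_assoc)
  also have "\<dots> = (S' ** S) ** J0 ** T'" by (simp add: assms(4) matrix_mul_assoc)
  finally have 1: "S' ** Z = J0 ** T'" by (simp add: S')
  have "S' ** W = S' ** W ** (T ** T')" by (simp add: T')
  also have "\<dots> = S' ** (W ** T) ** T'" by (simp add: matrix_mul_assoc)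
  also have "\<dots> = (S' ** S) ** T'" by (simp add: assms(3) matrix_mul_assoc)
  finally have 2: "S' ** W = mat 1 ** T'" by (simp add: S')
  show ?thesis unfolding equiv2_def using iS iT 1 2 by blast
qed

lemma jordan2:
  fixes Z W :: "'k::field^2^2"
  assumes dW: "det2 W \<noteq> 0" and dZ: "det2 Z = 0" and m: "mixed W Z = 0" and Z0: "Z \<noteq> 0"
  shows "equiv2 Z W J0 (mat 1)"
proof -
  obtain w1 w2 w3 w4 where W: "W = M2 w1 w2 w3 w4" by (rule M2_cases)
  obtain z1 z2 z3 z4 where Z: "Z = M2 z1 z2 z3 z4" by (rule M2_cases)
  define D where "D = w1 * w4 - w2 * w3"
  have D0: "D \<noteq> 0" using dW W D_def by simp
  have dz: "z1 * z4 - z2 * z3 = 0" using dZ Z by simp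
  have mm: "w1 * z4 + w4 * z1 - w2 * z3 - w3 * z2 = 0" using m W Z by simp
  show ?thesis
  proof (cases "z1 = 0 \<and> z3 = 0")
    case False
    define u1 where "u1 = w4 * z1 - w2 * z3"
    define u2 where "u2 = - w3 * z1 + w1 * z3"
    have Wu: "w1 * u1 + w2 * u2 = D * z1" "w3 * u1 + w4 * u2 = D * z3"
      unfolding u1_def u2_def D_def by algebra+
    have "z1 * u1 + z2 * u2 = z1 * (w1 * z4 + w4 * z1 - w2 * z3 - w3 * z2) - w1 * (z1 * z4 - z2 * z3)"
      "z3 * u1 + z4 * u2 = z3 * (w1 * z4 + w4 * z1 - w2 * z3 - w3 * z2) - w3 * (z1 * z4 - z2 * z3)"
      unfolding u1_def u2_def by algebra+
    then have Zu: "z1 * u1 + z2 * u2 = 0" "z3 * u1 + z4 * u2 = 0" using dz mm by simp_all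
    have u20: "u2 \<noteq> 0"
    proof
      assume u2: "u2 = 0"
      show False
      proof (cases "u1 = 0")
        case True then show ?thesis using Wu u2 D0 False by simp
      next
        case False then show ?thesis using Zu u2 \<open>\<not> (z1 = 0 \<and> z3 = 0)\<close> by simp
      qed
    qed
    define T where "T = M2 u1 D u2 0"
    have iT: "invertible T" using u20 D0 by (intro det2_inv) (simp add: T_def)
    have "det2 T \<noteq> 0" using u20 D0 by (simp add: T_def)
    then have iS: "invertible (W ** T)" using dW by (intro det2_inv) (simp only: det2_mult, simp)
    have "Z ** T = (W ** T) ** J0"
      using Zu Wu by (simp add: Z W T_def J0_def ac_simps)
    then show ?thesis using equiv2_of_ST[OF iS iT refl] by simp
  next
    case True
    then have z13: "z1 = 0" "z3 = 0" by auto
    have z24: "z2 \<noteq> 0 \<or> z4 \<noteq> 0" using Z0 Z z13 by (auto simp: M2_zero)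
    define u1 where "u1 = w4 * z2 - w2 * z4"
    define u2 where "u2 = - w3 * z2 + w1 * z4"
    have Wu: "w1 * u1 + w2 * u2 = D * z2" "w3 * u1 + w4 * u2 = D * z4"
      unfolding u1_def u2_def D_def by algebra+
    have u2: "u2 = 0" unfolding u2_def using mm z13 by (simp add: algebra_simps)
    then have Zu: "z2 * u2 = 0" "z4 * u2 = 0" by simp_all
    have u10: "u1 \<noteq> 0"
    proof
      assume u1: "u1 = 0"
      then show False using Wu u2 D0 z24 by simp
    qed
    define T where "T = M2 u1 0 u2 D"
    have iT: "invertible T" using u10 D0 by (intro det2_inv) (simp add: T_def)
    have "det2 T \<noteq> 0" using u10 D0 by (simp add: T_def)
    then have iS: "invertible (W ** T)" using dW by (intro det2_inv) (simp only: det2_mult, simp)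
    have "Z ** T = (W ** T) ** J0"
      using Zu Wu z13 by (simp add: Z W T_def J0_def ac_simps)
    then show ?thesis using equiv2_of_ST[OF iS iT refl] by simp
  qed
qed

lemma two_nz: assumes "CHAR('k::field) = 0" shows "(2::'k) \<noteq> 0"
proof -
  have "of_nat 2 \<noteq> (0::'k)" unfolding of_nat_eq_0_iff_char_dvd assms by simp
  then show ?thesis by simp
qed

lemma fam_Z: "comb s t (Af s t) (Bf s t) = M2 (s * s) (s * t) (s * t) (t * t)"
  by (simp add: Af_def Bf_def algebra_simps)

lemma fam_det: "det2 (comb a b (Af s t) (Bf s t)) = 2 * (a * t - b * s)^2"
  by (simp add: Af_def Bf_def algebra_simps power2_eq_square)

lemma fam_mixed: "mixed (comb p r (Af s t) (Bf s t)) (comb s t (Af s t) (Bf s t)) = 0"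
  by (simp add: Af_def Bf_def algebra_simps)

lemma pr_exists: assumes "(s, t) \<noteq> (0, 0::'k::field)" shows "\<exists>p r. s * r - t * p = 1"
proof (cases "s = 0")
  case True
  then have "t \<noteq> 0" using assms by auto
  then show ?thesis using True by (intro exI[of _ "- 1 / t"] exI[of _ 0]) simp
next
  case False
  then show ?thesis by (intro exI[of _ 0] exI[of _ "1 / s"]) simp
qed

lemma fam_nosplit:
  assumes ch: "CHAR('k::field) = 0" and st: "(s, t) \<noteq> (0, 0::'k)"
  shows "\<not> splitE (lowX (Af s t)) (lowX (Bf s t))"
proof
  assume sp: "splitE (lowX (Af s t)) (lowX (Bf s t))"
  obtain p r where pr: "s * r - t * p = 1" using pr_exists[OF st] by blast
  let ?Z = "comb s t (Af s t) (Bf s t)" and ?W = "comb p r (Af s t) (Bf s t)"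
  have sp2: "splitE (lowX ?Z) (lowX ?W)" using split_comb[OF sp] .
  have "p * t - r * s = - 1" using pr by (simp add: algebra_simps)
  then have dW: "det2 ?W \<noteq> 0" using two_nz[OF ch] unfolding fam_det by simp
  have dZ: "det2 ?Z = 0" unfolding fam_det by simp
  have Z0: "?Z \<noteq> 0"
  proof
    assume "?Z = 0"
    then have "s * s = 0" "t * t = 0" unfolding fam_Z M2_zero by simp_all
    then show False using st by simp
  qed
  have "equiv2 ?Z ?W J0 (mat 1)" using jordan2[OF dW dZ fam_mixed Z0] .
  then have "mod_iso (lowX J0, lowX (mat 1)) (lowX ?Z, lowX ?W)" by (rule mod_iso_sym[OF lift_iso])
  then have "splitE (lowX (J0::'k^2^2)) (lowX (mat 1))" using split_transport sp2 by fast
  then show False using nosplit_J0 by blast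
qed

definition Bot :: "('k::field^4) set" where "Bot = {v. v$1 = 0 \<and> v$2 = 0}"

lemma lowX_mv: "lowX A *v u = (\<chi> i. if i = 3 then A$1$1 * u$1 + A$1$2 * u$2 else if i = 4 then A$2$1 * u$1 + A$2$2 * u$2 else 0)"
  for A :: "'a::comm_ring_1^2^2"
  by (simp add: vec_eq_iff forall_4 matrix_vector_mult_def sum_4 lowX_def)

lemma dim_Bot: "vec.dim (Bot :: ('k::field^4) set) = 2"
proof (rule vec.dim_unique[of "{axis 3 1, axis 4 1}"])
  show "{axis 3 1, axis 4 1} \<subseteq> (Bot :: ('k::field^4) set)" by (simp add: Bot_def axis_def)
  show "Bot \<subseteq> vec.span {axis 3 1, axis 4 1 :: 'k^4}"
  proof
    fix v :: "'k^4" assume "v \<in> Bot"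
    then have "v = v$3 *s axis 3 1 + v$4 *s axis 4 1"
      by (simp add: Bot_def vec_eq_iff forall_4 axis_def)
    also have "\<dots> \<in> vec.span {axis 3 1, axis 4 1}"
      by (intro vec.span_add vec.span_scale vec.span_base) auto
    finally show "v \<in> vec.span {axis 3 1, axis 4 1}" .
  qed
  show "vec.independent {axis 3 1, axis 4 1 :: 'k^4}"
    by (rule vec.independent_mono[OF independent_cart_basis]) (auto simp: cart_basis_def)
  show "card {axis 3 1, axis 4 1 :: 'k^4} = 2"
    by (simp add: axis_eq_axis)
qed

lemma fam_mM:
  assumes ch: "CHAR('k::field) = 0" and st: "(s, t) \<noteq> (0, 0::'k)"
  shows "mM (lowX (Af s t)) (lowX (Bf s t)) = Bot"
proof
  show "mM (lowX (Af s t)) (lowX (Bf s t)) \<subseteq> Bot"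
    by (auto simp: mM_def Bot_def lowX_mv)
  show "Bot \<subseteq> mM (lowX (Af s t)) (lowX (Bf s t))"
  proof
    fix v :: "'k^4" assume v: "v \<in> Bot"
    have t2: "(2::'k) \<noteq> 0" using two_nz[OF ch] .
    show "v \<in> mM (lowX (Af s t)) (lowX (Bf s t))"
    proof (cases "s = 0")
      case False
      define u :: "'k^4" where "u = (\<chi> i. if i = 1 then v$3 / s else 0)"
      define u' :: "'k^4" where "u' = (\<chi> i. if i = 1 then (v$4 + t * v$3 / s) / (2 * s) else 0)"
      have "lowX (Af s t) *v u + lowX (Bf s t) *v u' = v"
        using v False t2 by (simp add: lowX_mv vec_eq_iff forall_4 Bot_def u_def u'_def Af_def Bf_def field_simps)
      then show ?thesis unfolding mM_def by blast
    next
      case True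
      then have t0: "t \<noteq> 0" using st by auto
      define u :: "'k^4" where "u = (\<chi> i. if i = 2 then (v$3 + s * v$4 / t) / (2 * t) else 0)"
      define u' :: "'k^4" where "u' = (\<chi> i. if i = 2 then v$4 / t else 0)"
      have "lowX (Af s t) *v u + lowX (Bf s t) *v u' = v"
        using v t0 t2 by (simp add: lowX_mv vec_eq_iff forall_4 Bot_def u_def u'_def Af_def Bf_def field_simps)
      then show ?thesis unfolding mM_def by blast
    qed
  qed
qed

lemma fam_inF2:
  assumes ch: "CHAR('k::field) = 0" and st: "(s, t) \<noteq> (0, 0::'k)"
  shows "in_F2 (lowX (Af s t)) (lowX (Bf s t))"
  unfolding in_F2_def
proof (intro conjI)
  let ?X = "lowX (Af s t)" and ?Y = "lowX (Bf s t)"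
  show "is_Amodule ?X ?Y" by (simp add: is_Amodule_def)
  have mp: "mpow A 0 = mat 1" "mpow A (Suc 0) = A" "mpow A 2 = A ** A" for A :: "'k^4^4"
    by (simp_all add: mpow_def numeral_2_eq_2)
  show "supported_at_m ?X ?Y" unfolding supported_at_m_def
  proof (intro exI[of _ 2] allI impI)
    fix i :: nat assume "i \<le> 2"
    then have "i = 0 \<or> i = 1 \<or> i = 2" by auto
    then show "mpow ?X i ** mpow ?Y (2 - i) = 0" by (auto simp: mp)
  qed
  show "indecomposable ?X ?Y" using fam_nosplit[OF ch st] indec_iff by blast
  have "\<forall>v\<in>mM ?X ?Y. ?X *v v = 0 \<and> ?Y *v v = 0"
    by (auto simp: mM_def matrix_vector_right_distrib matrix_vector_mul_assoc)
  then show "mM_iso_kk ?X ?Y" unfolding mM_iso_kk_def fam_mM[OF ch st] dim_Bot by simp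
qed


lemma rank1_vec:
  fixes Z :: "'k::field^2^2"
  assumes "det2 Z = 0" shows "\<exists>g::'k^4. \<forall>y. \<exists>a. lowX Z *v y = a *s g"
proof -
  obtain z1 z2 z3 z4 where Z: "Z = M2 z1 z2 z3 z4" by (rule M2_cases)
  have dz: "z1 * z4 = z2 * z3" using assms Z by simp
  show ?thesis
  proof (cases "z1 = 0 \<and> z3 = 0")
    case True
    show ?thesis
      by (rule exI[of _ "\<chi> i. if i = 3 then z2 else if i = 4 then z4 else 0"], rule allI,
          rule_tac x="y$2" in exI) (simp add: Z True lowX_mv vec_eq_iff forall_4)
  next
    case False
    define l where "l = (if z1 \<noteq> 0 then z2 / z1 else z4 / z3)"
    have l0: "z2 = l * z1 \<and> z4 = l * z3"
    proof (cases "z1 \<noteq> 0")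
      case True
      then show ?thesis using dz by (simp add: l_def field_simps)
    next
      case f: False
      then have z3: "z3 \<noteq> 0" using False by auto
      have "z2 * z3 = 0" using dz f by simp
      then have "z2 = 0" using z3 by simp
      then show ?thesis using f z3 by (simp add: l_def)
    qed
    then have l: "z2 = l * z1" "z4 = l * z3" by auto
    show ?thesis
      by (rule exI[of _ "\<chi> i. if i = 3 then z1 else if i = 4 then z3 else 0"], rule allI,
          rule_tac x="y$1 + l * y$2" in exI) (simp add: Z l lowX_mv vec_eq_iff forall_4 algebra_simps)
  qed
qed

lemma det_transport:
  fixes Z Z' :: "'k::field^2^2"
  assumes P: "invertible P" and PZ: "P ** lowX Z = lowX Z' ** P" and dZ: "det2 Z = 0"
  shows "det2 Z' = 0"
proof -
  obtain Q where Q: "P ** Q = mat 1" "Q ** P = mat 1" using P unfolding invertible_def by blast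
  obtain g where g: "\<forall>y. \<exists>a. lowX Z *v y = a *s g" using rank1_vec[OF dZ] by blast
  have Z': "lowX Z' = P ** lowX Z ** Q"
  proof -
    have "lowX Z' = lowX Z' ** (P ** Q)" by (simp add: Q)
    also have "\<dots> = P ** lowX Z ** Q" by (simp add: PZ matrix_mul_assoc)
    finally show ?thesis .
  qed
  have col: "\<exists>a. lowX Z' *v y = a *s (P *v g)" for y
  proof -
    obtain a where "lowX Z *v (Q *v y) = a *s g" using g by blast
    then have "lowX Z' *v y = P *v (a *s g)" by (simp add: Z' matrix_vector_mul_assoc[symmetric])
    then show ?thesis by (metis vec.scale)
  qed
  obtain a where a: "lowX Z' *v axis 1 1 = a *s (P *v g)" using col by blast
  obtain b where b: "lowX Z' *v axis 2 1 = b *s (P *v g)" using col by blast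
  have "Z'$1$1 = a * (P *v g)$3" "Z'$2$1 = a * (P *v g)$4"
    using arg_cong[OF a, of "\<lambda>v. v$3"] arg_cong[OF a, of "\<lambda>v. v$4"] by (simp_all add: lowX_mv axis_def)
  moreover have "Z'$1$2 = b * (P *v g)$3" "Z'$2$2 = b * (P *v g)$4"
    using arg_cong[OF b, of "\<lambda>v. v$3"] arg_cong[OF b, of "\<lambda>v. v$4"] by (simp_all add: lowX_mv axis_def)
  ultimately show ?thesis unfolding det2_def by simp
qed

lemma fam_scale: "Af (c * s) (c * t) = M2 c 0 0 c ** Af s t" "Bf (c * s) (c * t) = M2 c 0 0 c ** Bf s t"
  by (simp_all add: Af_def Bf_def algebra_simps)

lemma fam_iso_iff:
  assumes ch: "CHAR('k::field) = 0" and st: "(s, t) \<noteq> (0, 0::'k)" and st': "(s', t') \<noteq> (0, 0::'k)"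
  shows "mod_iso (lowX (Af s t), lowX (Bf s t)) (lowX (Af s' t'), lowX (Bf s' t'))
    \<longleftrightarrow> (\<exists>c. c \<noteq> 0 \<and> s' = c * s \<and> t' = c * t)"
proof
  assume "\<exists>c. c \<noteq> 0 \<and> s' = c * s \<and> t' = c * t"
  then obtain c where c: "c \<noteq> 0" "s' = c * s" "t' = c * t" by blast
  have i1: "invertible (M2 c 0 0 c)" using c by (intro det2_inv) simp
  have i2: "invertible (mat 1 :: 'k^2^2)" by (rule det2_inv) (simp add: M2_one)
  have "M2 c 0 0 c ** Af s t = Af s' t' ** mat 1" "M2 c 0 0 c ** Bf s t = Bf s' t' ** mat 1"
    by (simp_all add: c fam_scale)
  then have "equiv2 (Af s t) (Bf s t) (Af s' t') (Bf s' t')"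
    unfolding equiv2_def using i1 i2 by blast
  then show "mod_iso (lowX (Af s t), lowX (Bf s t)) (lowX (Af s' t'), lowX (Bf s' t'))"
    by (rule lift_iso)
next
  assume "mod_iso (lowX (Af s t), lowX (Bf s t)) (lowX (Af s' t'), lowX (Bf s' t'))"
  then obtain P where P: "invertible P" "P ** lowX (Af s t) = lowX (Af s' t') ** P"
    "P ** lowX (Bf s t) = lowX (Bf s' t') ** P" unfolding mod_iso_def by auto
  have "P ** lowX (comb s t (Af s t) (Bf s t)) = lowX (comb s t (Af s' t') (Bf s' t')) ** P"
    using intertwine_comb[OF P(2) P(3)] .
  moreover have "det2 (comb s t (Af s t) (Bf s t)) = 0" unfolding fam_det by simp
  ultimately have "det2 (comb s t (Af s' t') (Bf s' t')) = 0" using det_transport P(1) by blast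
  then have "2 * (s * t' - t * s')^2 = 0" unfolding fam_det .
  then have e: "s * t' = t * s'" using two_nz[OF ch] by simp
  show "\<exists>c. c \<noteq> 0 \<and> s' = c * s \<and> t' = c * t"
  proof (cases "s = 0")
    case False
    show ?thesis
    proof (intro exI[of _ "s' / s"] conjI)
      show "s' = s' / s * s" using False by simp
      show "t' = s' / s * t" using False e by (simp add: field_simps)
      show "s' / s \<noteq> 0"
      proof
        assume "s' / s = 0"
        then have "s' = 0" using False by simp
        then show False using e False st' by simp
      qed
    qed
  next
    case True
    then have t0: "t \<noteq> 0" using st by simp
    then have s'0: "s' = 0" using e True by simp
    then have "t' \<noteq> 0" using st' by simp
    then show ?thesis using True s'0 t0 by (intro exI[of _ "t' / t"]) simp
  qed
qed



lemma rank1_fact: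
  fixes Z :: "'k::field^2^2"
  assumes "det2 Z = 0" shows "\<exists>x1 x2 y1 y2. Z = M2 (x1 * y1) (x1 * y2) (x2 * y1) (x2 * y2)"
proof -
  obtain z1 z2 z3 z4 where Z: "Z = M2 z1 z2 z3 z4" by (rule M2_cases)
  have dz: "z1 * z4 = z2 * z3" using assms Z by simp
  show ?thesis
  proof (cases "z1 = 0 \<and> z3 = 0")
    case True
    then show ?thesis unfolding Z by (intro exI[of _ z2] exI[of _ z4] exI[of _ 0] exI[of _ 1]) simp
  next
    case False
    define l where "l = (if z1 \<noteq> 0 then z2 / z1 else z4 / z3)"
    have l0: "z2 = l * z1 \<and> z4 = l * z3"
    proof (cases "z1 \<noteq> 0")
      case True
      then show ?thesis using dz by (simp add: l_def field_simps)
    next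
      case f: False
      then have z3: "z3 \<noteq> 0" using False by auto
      have "z2 * z3 = 0" using dz f by simp
      then have "z2 = 0" using z3 by simp
      then show ?thesis using f z3 by (simp add: l_def)
    qed
    then show ?thesis unfolding Z
      by (intro exI[of _ z1] exI[of _ z3] exI[of _ 1] exI[of _ l]) (simp add: mult.commute)
  qed
qed

lemma split_ker:
  fixes A B :: "'k::field^2^2"
  assumes k: "(k1, k2) \<noteq> (0, 0)" and A: "A *v (\<chi> i. if i = 1 then k1 else k2) = 0"
    and B: "B *v (\<chi> i. if i = 1 then k1 else k2) = 0"
  shows "splitE (lowX A) (lowX B)"
proof -
  obtain a1 a2 a3 a4 where Ae: "A = M2 a1 a2 a3 a4" by (rule M2_cases)
  obtain b1 b2 b3 b4 where Be: "B = M2 b1 b2 b3 b4" by (rule M2_cases)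
  have ak: "a1 * k1 + a2 * k2 = 0" "a3 * k1 + a4 * k2 = 0"
    using A unfolding Ae by (simp_all add: vec_eq_iff forall_2)
  have bk: "b1 * k1 + b2 * k2 = 0" "b3 * k1 + b4 * k2 = 0"
    using B unfolding Be by (simp_all add: vec_eq_iff forall_2)
  show ?thesis
  proof (cases "k1 = 0")
    case False
    let ?H = "M2 1 0 (k2 / k1) 0"
    have "?H ** ?H = ?H" by simp
    moreover have "0 ** A = A ** ?H" "0 ** B = B ** ?H"
      using ak bk False by (simp_all add: Ae Be M2_zero field_simps)
    moreover have "\<not> (?H = 0 \<and> (0::'k^2^2) = 0)" "\<not> (?H = mat 1 \<and> (0::'k^2^2) = mat 1)"
      by (simp_all add: M2_zero M2_one)
    ultimately show ?thesis by (intro split_of_H[of ?H 0]) simp_all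
  next
    case True
    then have "k2 \<noteq> 0" using k by simp
    then have a: "a2 = 0" "a4 = 0" "b2 = 0" "b4 = 0" using ak bk True by simp_all
    let ?H = "M2 0 0 0 (1::'k)"
    have "?H ** ?H = ?H" by simp
    moreover have "0 ** A = A ** ?H" "0 ** B = B ** ?H"
      by (simp_all add: Ae Be M2_zero a)
    moreover have "\<not> (?H = 0 \<and> (0::'k^2^2) = 0)" "\<not> (?H = mat 1 \<and> (0::'k^2^2) = mat 1)"
      by (simp_all add: M2_zero M2_one)
    ultimately show ?thesis by (intro split_of_H[of ?H 0]) simp_all
  qed
qed

lemma split_coker:
  fixes A B :: "'k::field^2^2"
  assumes k: "(c1, c2) \<noteq> (0, 0)" and A: "c1 * A$1$1 + c2 * A$2$1 = 0" "c1 * A$1$2 + c2 * A$2$2 = 0"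
    and B: "c1 * B$1$1 + c2 * B$2$1 = 0" "c1 * B$1$2 + c2 * B$2$2 = 0"
  shows "splitE (lowX A) (lowX B)"
proof -
  obtain a1 a2 a3 a4 where Ae: "A = M2 a1 a2 a3 a4" by (rule M2_cases)
  obtain b1 b2 b3 b4 where Be: "B = M2 b1 b2 b3 b4" by (rule M2_cases)
  have ak: "c1 * a1 + c2 * a3 = 0" "c1 * a2 + c2 * a4 = 0" using A unfolding Ae by simp_all
  have bk: "c1 * b1 + c2 * b3 = 0" "c1 * b2 + c2 * b4 = 0" using B unfolding Be by simp_all
  show ?thesis
  proof (cases "c1 = 0")
    case False
    let ?H = "M2 1 (c2 / c1) 0 0"
    have "?H ** ?H = ?H" by simp
    moreover have "?H ** A = A ** 0" "?H ** B = B ** 0"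
      using ak bk False by (simp_all add: Ae Be M2_zero field_simps)
    moreover have "\<not> ((0::'k^2^2) = 0 \<and> ?H = 0)" "\<not> ((0::'k^2^2) = mat 1 \<and> ?H = mat 1)"
      by (simp_all add: M2_zero M2_one)
    ultimately show ?thesis by (intro split_of_H[of 0 ?H]) simp_all
  next
    case True
    then have "c2 \<noteq> 0" using k by simp
    then have a: "a3 = 0" "a4 = 0" "b3 = 0" "b4 = 0" using ak bk True by simp_all
    let ?H = "M2 0 0 0 (1::'k)"
    have "?H ** ?H = ?H" by simp
    moreover have "?H ** A = A ** 0" "?H ** B = B ** 0"
      by (simp_all add: Ae Be M2_zero a)
    moreover have "\<not> ((0::'k^2^2) = 0 \<and> ?H = 0)" "\<not> ((0::'k^2^2) = mat 1 \<and> ?H = mat 1)"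
      by (simp_all add: M2_zero M2_one)
    ultimately show ?thesis by (intro split_of_H[of 0 ?H]) simp_all
  qed
qed


lemma sing_split:
  fixes A B :: "'k::field^2^2"
  assumes dA: "det2 A = 0" and dB: "det2 B = 0" and m: "mixed A B = 0"
  shows "splitE (lowX A) (lowX B)"
proof -
  obtain x1 x2 y1 y2 where A: "A = M2 (x1 * y1) (x1 * y2) (x2 * y1) (x2 * y2)" using rank1_fact[OF dA] by blast
  obtain u1 u2 v1 v2 where B: "B = M2 (u1 * v1) (u1 * v2) (u2 * v1) (u2 * v2)" using rank1_fact[OF dB] by blast
  have "mixed A B = (x1 * u2 - x2 * u1) * (y1 * v2 - y2 * v1)" unfolding A B by (simp add: algebra_simps)
  then have "x1 * u2 = x2 * u1 \<or> y1 * v2 = y2 * v1" using m by simp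
  then show ?thesis
  proof
    assume xu: "x1 * u2 = x2 * u1"
    show ?thesis
    proof (cases "(x1, x2) = (0, 0)")
      case False
      show ?thesis
        by (rule split_coker[of x2 "- x1"]) (use False xu in \<open>auto simp: A B algebra_simps\<close>)
    next
      case x0: True
      show ?thesis
      proof (cases "(u1, u2) = (0, 0)")
        case False
        show ?thesis
          by (rule split_coker[of u2 "- u1"]) (use False x0 in \<open>auto simp: A B algebra_simps\<close>)
      next
        case True
        show ?thesis
          by (rule split_coker[of 1 0]) (use True x0 in \<open>auto simp: A B\<close>)
      qed
    qed
  next
    assume yv: "y1 * v2 = y2 * v1"
    show ?thesis
    proof (cases "(y1, y2) = (0, 0)")
      case False
      show ?thesis
        by (rule split_ker[of y2 "- y1"]) (use False yv in \<open>auto simp: A B algebra_simps vec_eq_iff forall_2\<close>)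
    next
      case y0: True
      show ?thesis
      proof (cases "(v1, v2) = (0, 0)")
        case False
        show ?thesis
          by (rule split_ker[of v2 "- v1"]) (use False y0 in \<open>auto simp: A B algebra_simps vec_eq_iff forall_2\<close>)
      next
        case True
        show ?thesis
          by (rule split_ker[of 1 0]) (use True y0 in \<open>auto simp: A B vec_eq_iff forall_2\<close>)
      qed
    qed
  qed
qed

definition Outer :: "'k::field \<Rightarrow> 'k \<Rightarrow> 'k \<Rightarrow> 'k \<Rightarrow> 'k \<Rightarrow> 'k^2^2" where
  "Outer a1 a2 y1 y2 m = M2 (a1 * y1 / m) (a1 * y2 / m) (a2 * y1 / m) (a2 * y2 / m)"

lemma outer_idem:
  assumes "m = y1 * a1 + y2 * a2" "m \<noteq> 0"
  shows "Outer a1 a2 y1 y2 m ** Outer a1 a2 y1 y2 m = Outer a1 a2 y1 y2 m"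
proof -
  have "a * y1 / m * (a1 * b / m) + a * y2 / m * (a2 * b / m) = a * b / m" for a b
  proof -
    have "a * y1 / m * (a1 * b / m) + a * y2 / m * (a2 * b / m) = a * b * (y1 * a1 + y2 * a2) / (m * m)"
      using assms(2) by (simp add: field_simps)
    also have "\<dots> = a * b * m / (m * m)" by (simp only: assms(1))
    also have "\<dots> = a * b / m" using assms(2) by simp
    finally show ?thesis .
  qed
  then show ?thesis unfolding Outer_def by simp
qed

lemma outer_not0: assumes "m = y1 * a1 + y2 * a2" "m \<noteq> 0" shows "Outer a1 a2 y1 y2 m \<noteq> 0"
  using assms by (auto simp: Outer_def M2_zero)

lemma outer_not1: assumes "m = y1 * a1 + y2 * a2" "m \<noteq> 0" shows "Outer a1 a2 y1 y2 m \<noteq> mat 1"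
proof
  assume "Outer a1 a2 y1 y2 m = mat 1"
  then have h: "a1 * y1 / m = 1" "a1 * y2 / m = 0" "a2 * y2 / m = 1" "a2 * y1 / m = 0"
    unfolding Outer_def M2_one M2_eq by blast+
  have "a1 * y2 = 0" using h(2) assms(2) by simp
  moreover have "a1 * y1 = m" using h(1) assms(2) by (simp add: divide_eq_1_iff)
  moreover have "a2 * y2 = m" using h(3) assms(2) by (simp add: divide_eq_1_iff)
  ultimately show False using assms(2) by auto
qed

lemma split_S2:
  fixes Z W :: "'k::field^2^2"
  assumes dZ: "det2 Z = 0" and m: "mixed W Z \<noteq> 0"
  shows "\<exists>H1 H2. H1 ** H1 = H1 \<and> H2 ** H2 = H2 \<and> H2 ** Z = Z ** H1 \<and> H2 ** W = W ** H1 \<and> H1 \<noteq> 0 \<and> H1 \<noteq> mat 1"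
proof -
  obtain x1 x2 y1 y2 where Z: "Z = M2 (x1 * y1) (x1 * y2) (x2 * y1) (x2 * y2)" using rank1_fact[OF dZ] by blast
  obtain w1 w2 w3 w4 where W: "W = M2 w1 w2 w3 w4" by (rule M2_cases)
  define a1 where "a1 = w4 * x1 - w2 * x2"
  define a2 where "a2 = - w3 * x1 + w1 * x2"
  define b1 where "b1 = y1 * w4 - y2 * w3"
  define b2 where "b2 = - y1 * w2 + y2 * w1"
  define mm where "mm = mixed W Z"
  have m1: "mm = y1 * a1 + y2 * a2" unfolding mm_def a1_def a2_def Z W by (simp add: algebra_simps)
  have m2: "mm = x1 * b1 + x2 * b2" unfolding mm_def b1_def b2_def Z W by (simp add: algebra_simps)
  have m0: "mm \<noteq> 0" using m mm_def by simp
  define H1 where "H1 = Outer a1 a2 y1 y2 mm"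
  define H2 where "H2 = Outer x1 x2 b1 b2 mm"
  have "H1 ** H1 = H1" unfolding H1_def using outer_idem[OF m1 m0] .
  moreover have "H2 ** H2 = H2"
  proof -
    have m2': "mm = b1 * x1 + b2 * x2" using m2 by (metis mult.commute)
    show ?thesis unfolding H2_def using outer_idem[OF m2' m0] .
  qed
  moreover have "H2 ** Z = Z ** H1"
  proof -
    have "x * b1 / mm * (x1 * y) + x * b2 / mm * (x2 * y) = x * y" for x y
    proof -
      have "x * b1 / mm * (x1 * y) + x * b2 / mm * (x2 * y) = x * y * (x1 * b1 + x2 * b2) / mm"
        using m0 by (simp add: field_simps)
      then show ?thesis using m2 m0 by simp
    qed
    moreover have "x * y1 * (a * y / mm) + x * y2 * (a' * y / mm) = x * y" if "a = a1" "a' = a2" for x y a a'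
    proof -
      have "x * y1 * (a * y / mm) + x * y2 * (a' * y / mm) = x * y * (y1 * a1 + y2 * a2) / mm"
        using that m0 by (simp add: field_simps)
      then show ?thesis using m1 m0 by simp
    qed
    ultimately show ?thesis unfolding H1_def H2_def Outer_def Z by simp
  qed
  moreover have "H2 ** W = W ** H1"
    unfolding H1_def H2_def Outer_def W a1_def a2_def b1_def b2_def using m0
    by (simp add: field_simps)
  moreover have "H1 \<noteq> 0" unfolding H1_def using outer_not0[OF m1 m0] .
  moreover have "H1 \<noteq> mat 1" unfolding H1_def using outer_not1[OF m1 m0] .
  ultimately show ?thesis by blast
qed

lemma split_S3:
  fixes W :: "'k::field^2^2"
  assumes dW: "det2 W \<noteq> 0"
  shows "\<exists>H1 H2. H1 ** H1 = H1 \<and> H2 ** H2 = H2 \<and> H2 ** 0 = 0 ** H1 \<and> H2 ** W = W ** H1 \<and> H1 \<noteq> 0 \<and> H1 \<noteq> mat 1"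
proof -
  obtain w1 w2 w3 w4 where W: "W = M2 w1 w2 w3 w4" by (rule M2_cases)
  define D where "D = w4 * w1 + (- w2) * w3"
  have "D = det2 W" by (simp add: D_def W algebra_simps)
  then have D0: "D \<noteq> 0" using dW by simp
  define H1 :: "'k^2^2" where "H1 = M2 1 0 0 0"
  define H2 where "H2 = Outer w1 w3 w4 (- w2) D"
  have "H1 ** H1 = H1" "H1 \<noteq> 0" "H1 \<noteq> mat 1" by (simp_all add: H1_def M2_zero M2_one)
  moreover have "H2 ** H2 = H2" unfolding H2_def using outer_idem[OF D_def D0] .
  moreover have "H2 ** (0::'k^2^2) = 0 ** H1" by simp
  moreover have "H2 ** W = W ** H1"
    unfolding H1_def H2_def Outer_def W using D0
    by (simp add: field_simps) (simp add: D_def algebra_simps)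
  ultimately show ?thesis by blast
qed

lemma split_ZW:
  fixes A B :: "'k::field^2^2"
  assumes st: "s * r - t * p = 1"
    and H: "H1 ** H1 = H1" "H2 ** H2 = H2" "H2 ** comb s t A B = comb s t A B ** H1"
      "H2 ** comb p r A B = comb p r A B ** H1" "H1 \<noteq> 0" "H1 \<noteq> mat 1"
  shows "splitE (lowX A) (lowX B)"
proof (rule split_of_H[OF H(1) H(2)])
  let ?Z = "comb s t A B" and ?W = "comb p r A B"
  have "H2 ** A = H2 ** comb r (-t) ?Z ?W" using comb_comb[OF st] by simp
  also have "\<dots> = comb r (-t) (H2 ** ?Z) (H2 ** ?W)" by (rule mult_comb)
  also have "\<dots> = comb r (-t) (?Z ** H1) (?W ** H1)" by (simp only: H(3) H(4))
  also have "\<dots> = comb r (-t) ?Z ?W ** H1" by (rule comb_mult[symmetric])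
  finally show "H2 ** A = A ** H1" using comb_comb[OF st] by simp
  have "H2 ** B = H2 ** comb (-p) s ?Z ?W" using comb_comb[OF st] by simp
  also have "\<dots> = comb (-p) s (H2 ** ?Z) (H2 ** ?W)" by (rule mult_comb)
  also have "\<dots> = comb (-p) s (?Z ** H1) (?W ** H1)" by (simp only: H(3) H(4))
  also have "\<dots> = comb (-p) s ?Z ?W ** H1" by (rule comb_mult[symmetric])
  finally show "H2 ** B = B ** H1" using comb_comb[OF st] by simp
  show "\<not> (H1 = 0 \<and> H2 = 0)" "\<not> (H1 = mat 1 \<and> H2 = mat 1)" using H by auto
qed



lemma equiv_via:
  fixes A B :: "'k::field^2^2"
  assumes st: "s * r - t * p = 1" and e: "equiv2 (comb s t A B) (comb p r A B) J0 (mat 1)"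
  shows "equiv2 A B (comb r (-t) J0 (mat 1)) (comb (-p) s J0 (mat 1))"
proof -
  let ?Z = "comb s t A B" and ?W = "comb p r A B"
  obtain G H where GH: "invertible G" "invertible H" "G ** ?Z = J0 ** H" "G ** ?W = mat 1 ** H"
    using e unfolding equiv2_def by blast
  have "G ** A = G ** comb r (-t) ?Z ?W" using comb_comb[OF st] by simp
  also have "\<dots> = comb r (-t) (G ** ?Z) (G ** ?W)" by (rule mult_comb)
  also have "\<dots> = comb r (-t) (J0 ** H) (mat 1 ** H)" by (simp only: GH(3) GH(4))
  also have "\<dots> = comb r (-t) J0 (mat 1) ** H" by (rule comb_mult[symmetric])
  finally have 1: "G ** A = comb r (-t) J0 (mat 1) ** H" .
  have "G ** B = G ** comb (-p) s ?Z ?W" using comb_comb[OF st] by simp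
  also have "\<dots> = comb (-p) s (G ** ?Z) (G ** ?W)" by (rule mult_comb)
  also have "\<dots> = comb (-p) s (J0 ** H) (mat 1 ** H)" by (simp only: GH(3) GH(4))
  also have "\<dots> = comb (-p) s J0 (mat 1) ** H" by (rule comb_mult[symmetric])
  finally have 2: "G ** B = comb (-p) s J0 (mat 1) ** H" .
  show ?thesis unfolding equiv2_def using GH(1,2) 1 2 by blast
qed

lemma fam_equivK:
  assumes ch: "CHAR('k::field) = 0" and st: "(s, t) \<noteq> (0, 0::'k)" and pr: "s * r - t * p = 1"
  shows "equiv2 (Af s t) (Bf s t) (comb r (-t) J0 (mat 1)) (comb (-p) s J0 (mat 1))"
proof -
  let ?Z = "comb s t (Af s t) (Bf s t)" and ?W = "comb p r (Af s t) (Bf s t)"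
  have "p * t - r * s = - 1" using pr by (simp add: algebra_simps)
  then have dW: "det2 ?W \<noteq> 0" using two_nz[OF ch] unfolding fam_det by simp
  have dZ: "det2 ?Z = 0" unfolding fam_det by simp
  have Z0: "?Z \<noteq> 0"
  proof
    assume "?Z = 0"
    then have "s * s = 0" "t * t = 0" unfolding fam_Z M2_zero by simp_all
    then show False using st by simp
  qed
  show ?thesis by (rule equiv_via[OF pr jordan2[OF dW dZ fam_mixed Z0]])
qed

lemma det2_poly:
  fixes A B :: "'k::field^2^2"
  shows "det2 (comb (s0 + x * p) (t0 + x * r) A B) =
    det2 (comb s0 t0 A B) + mixed (comb p r A B) (comb s0 t0 A B) * x + det2 (comb p r A B) * x^2"
  by (cases A rule: M2_cases, cases B rule: M2_cases) (simp add: algebra_simps power2_eq_square)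

lemma quad_root:
  fixes c0 c1 c2 :: "'k::alg_closed_field"
  assumes "c2 \<noteq> 0" shows "\<exists>x. c0 + c1 * x + c2 * x^2 = 0"
proof -
  define f where "f k = (if k = 0 then c0 else if k = 1 then c1 else c2)" for k :: nat
  obtain x where "(\<Sum>k\<le>2. f k * x ^ k) = 0"
    using alg_closed[of 2 f] assms by (auto simp: f_def)
  then have "c0 + c1 * x + c2 * x^2 = 0" by (simp add: f_def numeral_2_eq_2)
  then show ?thesis by blast
qed

lemma classify:
  fixes A B :: "'k::alg_closed_field^2^2"
  assumes ch: "CHAR('k) = 0" and ns: "\<not> splitE (lowX A) (lowX B)"
  shows "\<exists>s t. (s, t) \<noteq> (0, 0) \<and> mod_iso (lowX A, lowX B) (lowX (Af s t), lowX (Bf s t))"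
proof -
  have "\<exists>p r s0 t0. s0 * r - t0 * p = (1::'k) \<and> det2 (comb p r A B) \<noteq> 0"
  proof (cases "det2 A \<noteq> 0")
    case True
    then show ?thesis by (intro exI[of _ 1] exI[of _ 0] exI[of _ 0] exI[of _ "-1"]) (simp add: det2_comb)
  next
    case nA: False
    show ?thesis
    proof (cases "det2 B \<noteq> 0")
      case True
      then show ?thesis by (intro exI[of _ 0] exI[of _ 1] exI[of _ 1] exI[of _ 0]) (simp add: det2_comb)
    next
      case nB: False
      show ?thesis
      proof (cases "det2 (comb 1 1 A B) \<noteq> 0")
        case True
        then show ?thesis by (intro exI[of _ 1] exI[of _ 1] exI[of _ 1] exI[of _ 0]) simp
      next
        case False
        then have "mixed A B = 0" using nA nB by (simp add: det2_comb)
        then have "splitE (lowX A) (lowX B)" using nA nB sing_split by blast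
        then show ?thesis using ns by blast
      qed
    qed
  qed
  then obtain p r s0 t0 where pr0: "s0 * r - t0 * p = (1::'k)" and dW: "det2 (comb p r A B) \<noteq> 0"
    by blast
  obtain x where x: "det2 (comb s0 t0 A B) + mixed (comb p r A B) (comb s0 t0 A B) * x + det2 (comb p r A B) * x^2 = 0"
    using quad_root[OF dW] by blast
  define s where "s = s0 + x * p"
  define t where "t = t0 + x * r"
  have pr: "s * r - t * p = 1" unfolding s_def t_def using pr0 by (simp add: algebra_simps)
  have st: "(s, t) \<noteq> (0, 0)" using pr by auto
  let ?Z = "comb s t A B" and ?W = "comb p r A B"
  have dZ: "det2 ?Z = 0" unfolding s_def t_def det2_poly using x .
  show ?thesis
  proof (cases "mixed ?W ?Z \<noteq> 0")
    case True
    obtain H1 H2 where H: "H1 ** H1 = H1" "H2 ** H2 = H2" "H2 ** ?Z = ?Z ** H1" "H2 ** ?W = ?W ** H1"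
      "H1 \<noteq> 0" "H1 \<noteq> mat 1" using split_S2[OF dZ True] by blast
    have "splitE (lowX A) (lowX B)" using split_ZW[OF pr H] .
    then show ?thesis using ns by blast
  next
    case m: False
    show ?thesis
    proof (cases "?Z = 0")
      case True
      obtain H1 H2 where H: "H1 ** H1 = H1" "H2 ** H2 = H2" "H2 ** 0 = 0 ** H1" "H2 ** ?W = ?W ** H1"
        "H1 \<noteq> 0" "H1 \<noteq> mat 1" using split_S3[OF dW] by blast
      have "splitE (lowX A) (lowX B)" using split_ZW[OF pr H(1,2) _ H(4,5,6)] H(3) True by simp
      then show ?thesis using ns by blast
    next
      case False
      have m0: "mixed ?W ?Z = 0" using m by simp
      have e1: "equiv2 A B (comb r (-t) J0 (mat 1)) (comb (-p) s J0 (mat 1))"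
        by (rule equiv_via[OF pr jordan2[OF dW dZ m0 False]])
      have e2: "equiv2 (Af s t) (Bf s t) (comb r (-t) J0 (mat 1)) (comb (-p) s J0 (mat 1))"
        by (rule fam_equivK[OF ch st pr])
      have "mod_iso (lowX A, lowX B) (lowX (Af s t), lowX (Bf s t))"
        by (rule mod_iso_trans[OF lift_iso[OF e1] mod_iso_sym[OF lift_iso[OF e2]]])
      then show ?thesis using st by blast
    qed
  qed
qed



lemma mv_axis: "(M::'a::semiring_1^'n^'m) *v axis j 1 = (\<chi> i. M$i$j)"
  by (simp add: vec_eq_iff matrix_vector_mult_def axis_def if_distrib if_distribR sum.delta' cong: if_cong)

lemma span2_elem:
  assumes "v \<in> vec.span {f1, f2 :: 'k::field^'n}" shows "\<exists>a b. v = a *s f1 + b *s f2"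
proof -
  from assms obtain k where "v - k *s f1 \<in> vec.span {f2}" unfolding vec.span_insert by blast
  then obtain l where "v - k *s f1 = l *s f2" unfolding vec.span_singleton by blast
  then have "v = k *s f1 + l *s f2" by (simp add: algebra_simps)
  then show ?thesis by blast
qed

lemma basis_matrix:
  fixes N :: "('k::field^4) set"
  assumes dN: "vec.dim N = 2"
  shows "\<exists>Q::'k^4^4. invertible Q \<and> Q *v axis (3::4) 1 \<in> N \<and> Q *v axis (4::4) 1 \<in> N \<and>
    (\<forall>v\<in>N. \<exists>a b. v = a *s (Q *v axis (3::4) 1) + b *s (Q *v axis (4::4) 1))"
proof -
  obtain Bs where Bs: "Bs \<subseteq> N" "vec.independent Bs" "N \<subseteq> vec.span Bs" "card Bs = vec.dim N"
    using vec.basis_exists by blast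
  obtain f1 f2 where f: "Bs = {f1, f2}" "f1 \<noteq> f2" using Bs(4) dN card_2_iff by metis
  define Ext where "Ext = vec.extend_basis Bs"
  have Ext: "Bs \<subseteq> Ext" "vec.independent Ext" "vec.span Ext = UNIV"
    unfolding Ext_def using vec.extend_basis_superset vec.independent_extend_basis vec.span_extend_basis Bs(2)
    by auto
  have cE: "card Ext = 4"
    using vec.basis_card_eq_dim[of Ext UNIV] Ext vec_dim_card[where 'a='k and 'n=4] by simp
  have fin: "finite Ext" using cE card_ge_0_finite by force
  have "card (Ext - {f1, f2}) = 2" using cE Ext(1) f fin by (simp add: card_Diff_subset)
  then obtain b1 b2 where b: "Ext - {f1, f2} = {b1, b2}" "b1 \<noteq> b2" using card_2_iff by metis
  have bE: "b1 \<in> Ext" "b2 \<in> Ext" "b1 \<notin> {f1, f2}" "b2 \<notin> {f1, f2}" using b by blast+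
  have fE: "f1 \<in> Ext" "f2 \<in> Ext" using Ext(1) f by auto
  define col where "col j = (if j = (1::4) then b1 else if j = 2 then b2 else if j = 3 then f1 else f2)" for j
  define Q :: "'k^4^4" where "Q = (\<chi> i j. col j $ i)"
  have Qc: "Q *v axis j 1 = col j" for j by (simp add: mv_axis Q_def vec_eq_iff)
  have colQ: "column j Q = col j" for j by (simp add: column_def Q_def vec_eq_iff)
  have indep: "vec.independent {b1, b2, f1, f2}"
    using vec.independent_mono[OF Ext(2)] bE fE by auto
  have inv: "invertible Q"
    unfolding invertible_left_inverse matrix_left_invertible_independent_columns
  proof (intro allI impI)
    fix c :: "4 \<Rightarrow> 'k" and i :: 4
    assume h: "(\<Sum>i\<in>UNIV. c i *s column i Q) = 0"
    define u where "u v = (if v = b1 then c 1 else if v = b2 then c 2 else if v = f1 then c 3 else c 4)" for v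
    have ne: "b1 \<noteq> f1" "b1 \<noteq> f2" "b2 \<noteq> f1" "b2 \<noteq> f2" using bE by auto
    have "(\<Sum>v\<in>{b1, b2, f1, f2}. u v *s v) = c 1 *s b1 + c 2 *s b2 + c 3 *s f1 + c 4 *s f2"
      using ne b(2) f(2) by (simp add: u_def ac_simps)
    also have "\<dots> = 0" using h by (simp add: sum_4 colQ col_def)
    finally have s0: "(\<Sum>v\<in>{b1, b2, f1, f2}. u v *s v) = 0" .
    have "\<forall>v\<in>{b1, b2, f1, f2}. u v = 0"
      using indep s0 vec.dependent_finite[of "{b1, b2, f1, f2}"] by auto
    then have "c 1 = 0" "c 2 = 0" "c 3 = 0" "c 4 = 0" using ne b(2) f(2) by (auto simp: u_def)
    then show "c i = 0" using exhaust_4[of i] by auto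
  qed
  have "Q *v axis 3 1 \<in> N" "Q *v axis 4 1 \<in> N" using Bs(1) f by (auto simp: Qc col_def)
  moreover have "\<forall>v\<in>N. \<exists>a b. v = a *s (Q *v axis 3 1) + b *s (Q *v axis 4 1)"
  proof
    fix v assume "v \<in> N"
    then have "v \<in> vec.span {f1, f2}" using Bs(3) f by auto
    then show "\<exists>a b. v = a *s (Q *v axis 3 1) + b *s (Q *v axis 4 1)"
      using span2_elem by (simp add: Qc col_def)
  qed
  ultimately show ?thesis using inv by blast
qed


lemma blk_one:
  fixes M Q Q' :: "'k::field^4^4"
  assumes QQ: "Q' ** Q = mat 1" and MN: "\<forall>u. M *v u \<in> N" and M0: "\<forall>v\<in>N. M *v v = 0"
    and Q3: "Q *v axis (3::4) 1 \<in> N" and Q4: "Q *v axis (4::4) 1 \<in> N"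
    and sp: "\<forall>v\<in>N. \<exists>a b. v = a *s (Q *v axis (3::4) 1) + b *s (Q *v axis (4::4) 1)"
  shows "Q' ** M ** Q = lowX (M2 ((Q' ** M ** Q)$3$1) ((Q' ** M ** Q)$3$2) ((Q' ** M ** Q)$4$1) ((Q' ** M ** Q)$4$2))"
proof -
  let ?M = "Q' ** M ** Q"
  have col: "?M *v axis j 1 = Q' *v (M *v (Q *v axis j 1))" for j
    by (simp add: matrix_vector_mul_assoc matrix_mul_assoc)
  have z34: "?M $ i $ j = 0" if "j = 3 \<or> j = 4" for i j
  proof -
    have "M *v (Q *v axis j 1) = 0" using that Q3 Q4 M0 by auto
    then have "?M *v axis j 1 = 0" using col by simp
    then show ?thesis by (simp add: mv_axis vec_eq_iff)
  qed
  have z12: "?M $ 1 $ j = 0 \<and> ?M $ 2 $ j = 0" for j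
  proof -
    obtain a b where ab: "M *v (Q *v axis j 1) = a *s (Q *v axis (3::4) 1) + b *s (Q *v axis (4::4) 1)"
      using sp MN by blast
    have "?M *v axis j 1 = Q' *v (Q *v (a *s axis (3::4) 1 + b *s axis (4::4) 1))"
      using col ab by (simp add: matrix_vector_right_distrib vec.scale)
    also have "\<dots> = a *s axis (3::4) 1 + b *s axis (4::4) 1" by (simp add: matrix_vector_mul_assoc QQ)
    finally have e: "?M *v axis j 1 = a *s axis (3::4) 1 + b *s axis (4::4) 1" .
    have "(?M *v axis j 1)$1 = 0" "(?M *v axis j 1)$2 = 0" unfolding e by (simp_all add: axis_def)
    then show ?thesis unfolding mv_axis by simp
  qed
  show ?thesis
    using z34 z12 by (simp add: vec_eq_iff forall_4 lowX_def M2_def)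
qed

lemma blockform:
  fixes X Y :: "'k::field^4^4"
  assumes "mM_iso_kk X Y"
  shows "\<exists>A B. mod_iso (X, Y) (lowX A, lowX B)"
proof -
  let ?N = "mM X Y"
  have dN: "vec.dim ?N = 2" and kill: "\<forall>v\<in>?N. X *v v = 0 \<and> Y *v v = 0"
    using assms unfolding mM_iso_kk_def by auto
  obtain Q where Q: "invertible Q" "Q *v axis (3::4) 1 \<in> ?N" "Q *v axis (4::4) 1 \<in> ?N"
    "\<forall>v\<in>?N. \<exists>a b. v = a *s (Q *v axis (3::4) 1) + b *s (Q *v axis (4::4) 1)"
    using basis_matrix[OF dN] by blast
  obtain Q' where QQ: "Q ** Q' = mat 1" "Q' ** Q = mat 1" using Q(1) unfolding invertible_def by blast
  have XN: "\<forall>u. X *v u \<in> ?N"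
  proof
    fix u show "X *v u \<in> ?N" unfolding mM_def by (rule CollectI, rule exI[of _ u], rule exI[of _ 0]) simp
  qed
  have YN: "\<forall>u. Y *v u \<in> ?N"
  proof
    fix u show "Y *v u \<in> ?N" unfolding mM_def by (rule CollectI, rule exI[of _ 0], rule exI[of _ u]) simp
  qed
  have X0: "\<forall>v\<in>?N. X *v v = 0" and Y0: "\<forall>v\<in>?N. Y *v v = 0" using kill by auto
  define A where "A = M2 ((Q' ** X ** Q)$3$1) ((Q' ** X ** Q)$3$2) ((Q' ** X ** Q)$4$1) ((Q' ** X ** Q)$4$2)"
  define B where "B = M2 ((Q' ** Y ** Q)$3$1) ((Q' ** Y ** Q)$3$2) ((Q' ** Y ** Q)$4$1) ((Q' ** Y ** Q)$4$2)"
  have XA: "Q' ** X ** Q = lowX A" unfolding A_def by (rule blk_one[OF QQ(2) XN X0 Q(2) Q(3) Q(4)])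
  have YB: "Q' ** Y ** Q = lowX B" unfolding B_def by (rule blk_one[OF QQ(2) YN Y0 Q(2) Q(3) Q(4)])
  have iQ': "invertible Q'" using QQ unfolding invertible_def by blast
  have "Q' ** X = lowX A ** Q'"
  proof -
    have "lowX A ** Q' = Q' ** X ** (Q ** Q')" by (simp add: XA matrix_mul_assoc)
    then show ?thesis by (simp add: QQ)
  qed
  moreover have "Q' ** Y = lowX B ** Q'"
  proof -
    have "lowX B ** Q' = Q' ** Y ** (Q ** Q')" by (simp add: YB matrix_mul_assoc)
    then show ?thesis by (simp add: QQ)
  qed
  ultimately show ?thesis unfolding mod_iso_def using iQ' by auto
qed


theorem proposition5p5:
  assumes "CHAR('k::alg_closed_field) = 0"
  shows "\<exists>PX PY :: 'k poly poly^4^4.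
     (\<forall>s t. (s, t) \<noteq> (0, 0) \<longrightarrow> in_F2 (fst (eval_family PX PY s t)) (snd (eval_family PX PY s t)))
   \<and> (\<forall>s t s' t'. (s, t) \<noteq> (0, 0) \<longrightarrow> (s', t') \<noteq> (0, 0) \<longrightarrow>
        (mod_iso (eval_family PX PY s t) (eval_family PX PY s' t')
           \<longleftrightarrow> (\<exists>c. c \<noteq> 0 \<and> s' = c * s \<and> t' = c * t)))
   \<and> (\<forall>X Y. in_F2 X Y \<longrightarrow> (\<exists>s t. (s, t) \<noteq> (0, 0) \<and> mod_iso (X, Y) (eval_family PX PY s t)))"
proof -
  let ?PX = "lowX PA :: 'k poly poly^4^4" and ?PY = "lowX PB :: 'k poly poly^4^4"
  have 1: "\<forall>s t. (s, t) \<noteq> (0, 0) \<longrightarrow> in_F2 (fst (eval_family ?PX ?PY s t)) (snd (eval_family ?PX ?PY s t))"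
  proof (intro allI impI)
    fix s t :: 'k
    assume st: "(s, t) \<noteq> (0, 0)"
    show "in_F2 (fst (eval_family ?PX ?PY s t)) (snd (eval_family ?PX ?PY s t))"
      unfolding eval_fam using fam_inF2[OF assms st] by simp
  qed
  have 2: "\<forall>s t s' t'. (s, t) \<noteq> (0, 0) \<longrightarrow> (s', t') \<noteq> (0, 0) \<longrightarrow>
        (mod_iso (eval_family ?PX ?PY s t) (eval_family ?PX ?PY s' t')
           \<longleftrightarrow> (\<exists>c. c \<noteq> 0 \<and> s' = c * s \<and> t' = c * t))"
  proof (intro allI impI)
    fix s t s' t' :: 'k
    assume st: "(s, t) \<noteq> (0, 0)" and st': "(s', t') \<noteq> (0, 0)"
    show "mod_iso (eval_family ?PX ?PY s t) (eval_family ?PX ?PY s' t')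
           \<longleftrightarrow> (\<exists>c. c \<noteq> 0 \<and> s' = c * s \<and> t' = c * t)"
      unfolding eval_fam using fam_iso_iff[OF assms st st'] .
  qed
  have 3: "\<forall>X Y. in_F2 X Y \<longrightarrow> (\<exists>s t. (s, t) \<noteq> (0, 0) \<and> mod_iso (X, Y) (eval_family ?PX ?PY s t))"
  proof (intro allI impI)
    fix X Y :: "'k^4^4"
    assume F: "in_F2 X Y"
    then have mk: "mM_iso_kk X Y" and ind: "indecomposable X Y" unfolding in_F2_def by auto
    obtain A B where AB: "mod_iso (X, Y) (lowX A, lowX B)" using blockform[OF mk] by blast
    have "indecomposable (lowX A) (lowX B)" using indec_transport[OF AB ind] .
    then have ns: "\<not> splitE (lowX A) (lowX B)" using indec_iff by blast
    obtain s t where st: "(s, t) \<noteq> (0, 0)" and iso: "mod_iso (lowX A, lowX B) (lowX (Af s t), lowX (Bf s t))"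
      using classify[OF assms ns] by blast
    have "mod_iso (X, Y) (eval_family ?PX ?PY s t)"
      unfolding eval_fam by (rule mod_iso_trans[OF AB iso])
    then show "\<exists>s t. (s, t) \<noteq> (0, 0) \<and> mod_iso (X, Y) (eval_family ?PX ?PY s t)"
      using st by blast
  qed
  show ?thesis using 1 2 3 by blast
qed

end
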